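(* Let $\epsilon\in(0,1]$, let $G$ be a finite group, $\alpha$ an automorphism of $G$, and $S:=\{g\in G:\alpha(g)=g^{-1}\}$. If $s,t\in S$ satisfy $|sS\cap tS|\geq\epsilon|G|$, then $|C_G(st^{-1})|\geq\epsilon|G|$, where $C_G(x)$ denotes the centralizer of $x$ in $G$.
   Context: For $s\in G$ and $S\subseteq G$, $sS=\{sx:x\in S\}$ is the left translate. *)

theory Defs
  imports Complex_Main "HOL-Algebra.Coset"
begin

definition centralizer :: "('a, 'b) monoid_scheme \<Rightarrow> 'a \<Rightarrow> 'a set" where
  "centralizer G x = {g \<in> carrier G. g \<otimes>\<^bsub>G\<^esub> x = x \<otimes>\<^bsub>G\<^esub> g}"

end

theory Submission
  imports Defs
begin

lemma key:
  fixes G (structure)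
  assumes "group G" and h: "\<alpha> \<in> hom G G" and s: "s \<in> carrier G" and a: "a \<in> carrier G"
    and as: "\<alpha> s = inv s" and aa: "\<alpha> a = inv a"
  shows "\<alpha> (s \<otimes> a) = inv s \<otimes> inv (s \<otimes> a) \<otimes> s"
proof -
  interpret group G by fact
  have "\<alpha> (s \<otimes> a) = inv s \<otimes> inv a" using h s a as aa by (simp add: hom_mult)
  also have "inv a = inv (s \<otimes> a) \<otimes> s" using s a by (simp add: inv_mult_group m_assoc)
  finally show ?thesis using s a by (simp add: m_assoc)
qed

theorem lemma5:
  fixes G (structure) and \<alpha> :: "'a \<Rightarrow> 'a" and \<epsilon> :: real and S :: "'a set" and s t :: 'a
  assumes "group G" and "finite (carrier G)"
    and "\<alpha> \<in> iso G G"
    and "0 < \<epsilon>" and "\<epsilon> \<le> 1"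
    and "S = {g \<in> carrier G. \<alpha> g = inv g}"
    and "s \<in> S" and "t \<in> S"
    and "real (card ((s <# S) \<inter> (t <# S))) \<ge> \<epsilon> * real (card (carrier G))"
  shows "real (card (centralizer G (s \<otimes> inv t))) \<ge> \<epsilon> * real (card (carrier G))"
proof -
  interpret group G by fact
  have h: "\<alpha> \<in> hom G G" using assms(3) by (simp add: iso_def)
  have sc: "s \<in> carrier G" "\<alpha> s = inv s" using assms(6,7) by auto
  have tc: "t \<in> carrier G" "\<alpha> t = inv t" using assms(6,8) by auto
  let ?X = "(s <# S) \<inter> (t <# S)"
  have sub: "(\<lambda>x. inv x) ` ?X \<subseteq> centralizer G (s \<otimes> inv t)"
  proof
    fix y assume "y \<in> (\<lambda>x. inv x) ` ?X"
    then obtain x where x: "x \<in> ?X" "y = inv x" by auto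
    from x obtain a b where a: "a \<in> carrier G" "\<alpha> a = inv a" "x = s \<otimes> a"
      and b: "b \<in> carrier G" "\<alpha> b = inv b" "x = t \<otimes> b"
      using assms(6) unfolding l_coset_def by auto
    have xc: "x \<in> carrier G" using a sc by simp
    have e1: "\<alpha> x = inv s \<otimes> y \<otimes> s" using key[OF assms(1) h sc(1) a(1) sc(2) a(2)] a(3) x(2) by simp
    have e2: "\<alpha> x = inv t \<otimes> y \<otimes> t" using key[OF assms(1) h tc(1) b(1) tc(2) b(2)] b(3) x(2) by simp
    have yc: "y \<in> carrier G" using xc x by simp
    have "inv s \<otimes> y \<otimes> s = inv t \<otimes> y \<otimes> t" using e1 e2 by simp
    hence "s \<otimes> (inv s \<otimes> y \<otimes> s) \<otimes> inv t = s \<otimes> (inv t \<otimes> y \<otimes> t) \<otimes> inv t" by simp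
    moreover have "s \<otimes> (inv s \<otimes> y \<otimes> s) \<otimes> inv t = y \<otimes> (s \<otimes> inv t)"
    proof -
      have c: "s \<otimes> (inv s \<otimes> w) = w" if "w \<in> carrier G" for w
      proof -
        have "s \<otimes> (inv s \<otimes> w) = (s \<otimes> inv s) \<otimes> w"
          using sc that by (intro m_assoc[symmetric]) auto
        thus ?thesis using sc that by simp
      qed
      show ?thesis using sc tc yc by (simp add: m_assoc c)
    qed
    moreover have "s \<otimes> (inv t \<otimes> y \<otimes> t) \<otimes> inv t = (s \<otimes> inv t) \<otimes> y"
      using sc tc yc by (simp add: m_assoc)
    ultimately have "y \<otimes> (s \<otimes> inv t) = (s \<otimes> inv t) \<otimes> y" by simp
    thus "y \<in> centralizer G (s \<otimes> inv t)" using yc by (simp add: centralizer_def)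
  qed
  have Xc: "?X \<subseteq> carrier G"
  proof -
    have "S \<subseteq> carrier G" using assms(6) by auto
    hence "s <# S \<subseteq> carrier G" using sc(1) by (rule l_coset_subset_G)
    thus ?thesis by auto
  qed
  have inj: "inj_on (\<lambda>x. inv x) ?X"
  proof (rule inj_onI)
    fix x y assume "x \<in> ?X" "y \<in> ?X" "inv x = inv y"
    hence "inv (inv x) = inv (inv y)" "x \<in> carrier G" "y \<in> carrier G" using Xc by auto
    thus "x = y" by simp
  qed
  have "card ?X = card ((\<lambda>x. inv x) ` ?X)" using inj by (simp add: card_image)
  also have "\<dots> \<le> card (centralizer G (s \<otimes> inv t))"
    apply (rule card_mono) using assms(2) sub by (auto simp: centralizer_def intro: finite_subset)
  finally show ?thesis using assms(9) by linarith
qed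

end
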